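(* Let $R\in[0,\tfrac34]$ and let $S_1\subseteq S$ be the set of offline vertices covered by the advice $A$. Run the algorithm described in the context with $$f_j(x)=f_{\mathsf U}(x):=\min\Bigl\{\frac{1-R}{1-x},1\Bigr\}\ \ (j\in S\setminus S_1),\qquad f_j(x)=f_{\mathsf L}(x):=\max\Bigl\{1-\frac{1-R}{x},0\Bigr\}\ \ (j\in S_1).$$ Then for every instance $G$ and advice $A$, $$\mathsf{ALG}(G,A)\ \ge\ \bigl(2\sqrt{1-R}-(1-R)\bigr)\cdot\mathsf{ADVICE}(G,A),$$ i.e. the algorithm is $C$-consistent with $C=2\sqrt{1-R}-(1-R)$, equivalently $\sqrt{1-R}+\sqrt{1-C}=1$.
   Context: Setting (two-stage vertex-weighted bipartite matching with advice). A bipartite graph $G=(D,S,E)$ has offline vertices $S$, each $j\in S$ carrying a weight $w_j\ge 0$, and online vertices $D=D_1\sqcup D_2$ arriving in two stages. $E_1$ (resp. $E_2$) denotes the set of edges between $D_1$ (resp. $D_2$) and $S$. The advice is a matching $A\subseteq E_1$; $S_1\subseteq S$ denotes the set of offline vertices covered by $A$. $\mathsf{ADVICE}(G,A)=\sum_{j\in S_1}w_j+\max\{\sum_{j\text{ covered by }M}w_j: M\subseteq E_2\text{ a matching covering no vertex of }S_1\}$ (the value of following the advice exactly in the first stage and then matching optimally). Algorithm (parameters: functions $f_j:[0,1]\to[0,1]$, $j\in S$). First stage: after $D_1,E_1,A$ are revealed, let $\bar x$ be an optimal solution of (P1): maximize $\sum_{j\in S} w_j\bigl(x_j-\int_0^{x_j}f_j(t)\,dt\bigr)$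 subject to $x_i:=\sum_{j:(i,j)\in E_1}x_{ij}\le 1$ ($i\in D_1$), $x_j:=\sum_{i:(i,j)\in E_1}x_{ij}\le 1$ ($j\in S$), $x_{ij}\ge0$. Second stage: after $D_2,E_2$ are revealed, let $\bar y$ be an optimal solution of (P2): maximize $\sum_{j\in S}w_jy_j$ subject to $y_i:=\sum_{j:(i,j)\in E_2}y_{ij}\le 1$ ($i\in D_2$), $y_j:=\sum_{i:(i,j)\in E_2}y_{ij}\le 1-\bar x_j$ ($j\in S$), $y_{ij}\ge 0$. The algorithm's value is $\mathsf{ALG}(G,A)=\sum_{j\in S}w_j(\bar x_j+\bar y_j)$. *)

theory Defs
  imports "HOL-Analysis.Analysis"
begin

text \<open>Edges are pairs (online vertex, offline vertex).  A set of edges is a matching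
  if no two distinct edges share an endpoint.\<close>
definition is_matching :: "('d \<times> 's) set \<Rightarrow> bool" where
  "is_matching M \<longleftrightarrow> (\<forall>e\<in>M. \<forall>e'\<in>M. e \<noteq> e' \<longrightarrow> fst e \<noteq> fst e' \<and> snd e \<noteq> snd e')"

definition covered_off :: "('d \<times> 's) set \<Rightarrow> 's set" where
  "covered_off M = snd ` M"

definition load_on :: "('d \<times> 's) set \<Rightarrow> ('d \<times> 's \<Rightarrow> real) \<Rightarrow> 'd \<Rightarrow> real" where
  "load_on E x i = (\<Sum>e\<in>{e\<in>E. fst e = i}. x e)"

definition load_off :: "('d \<times> 's) set \<Rightarrow> ('d \<times> 's \<Rightarrow> real) \<Rightarrow> 's \<Rightarrow> real" where
  "load_off E x j = (\<Sum>e\<in>{e\<in>E. snd e = j}. x e)"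

definition advice_value ::
  "'s set \<Rightarrow> ('s \<Rightarrow> real) \<Rightarrow> ('d \<times> 's) set \<Rightarrow> ('d \<times> 's) set \<Rightarrow> real" where
  "advice_value S w E2 A =
     (\<Sum>j\<in>covered_off A. w j) +
     Max {(\<Sum>j\<in>covered_off M. w j) | M. M \<subseteq> E2 \<and> is_matching M \<and> covered_off M \<inter> covered_off A = {}}"

definition P1_feasible ::
  "'d set \<Rightarrow> 's set \<Rightarrow> ('d \<times> 's) set \<Rightarrow> ('d \<times> 's \<Rightarrow> real) \<Rightarrow> bool" where
  "P1_feasible D1 S E1 x \<longleftrightarrow>
     (\<forall>e\<in>E1. 0 \<le> x e) \<and> (\<forall>i\<in>D1. load_on E1 x i \<le> 1) \<and> (\<forall>j\<in>S. load_off E1 x j \<le> 1)"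

definition P1_obj ::
  "'s set \<Rightarrow> ('s \<Rightarrow> real) \<Rightarrow> ('s \<Rightarrow> real \<Rightarrow> real) \<Rightarrow> ('d \<times> 's) set \<Rightarrow> ('d \<times> 's \<Rightarrow> real) \<Rightarrow> real" where
  "P1_obj S w f E1 x =
     (\<Sum>j\<in>S. w j * (load_off E1 x j - integral {0..load_off E1 x j} (f j)))"

definition P1_optimal ::
  "'d set \<Rightarrow> 's set \<Rightarrow> ('s \<Rightarrow> real) \<Rightarrow> ('s \<Rightarrow> real \<Rightarrow> real) \<Rightarrow> ('d \<times> 's) set \<Rightarrow> ('d \<times> 's \<Rightarrow> real) \<Rightarrow> bool" where
  "P1_optimal D1 S w f E1 x \<longleftrightarrow>
     P1_feasible D1 S E1 x \<and> (\<forall>x'. P1_feasible D1 S E1 x' \<longrightarrow> P1_obj S w f E1 x' \<le> P1_obj S w f E1 x)"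

definition P2_feasible ::
  "'d set \<Rightarrow> 's set \<Rightarrow> ('d \<times> 's) set \<Rightarrow> ('d \<times> 's) set \<Rightarrow> ('d \<times> 's \<Rightarrow> real) \<Rightarrow> ('d \<times> 's \<Rightarrow> real) \<Rightarrow> bool" where
  "P2_feasible D2 S E1 E2 xbar y \<longleftrightarrow>
     (\<forall>e\<in>E2. 0 \<le> y e) \<and> (\<forall>i\<in>D2. load_on E2 y i \<le> 1) \<and>
     (\<forall>j\<in>S. load_off E2 y j \<le> 1 - load_off E1 xbar j)"

definition P2_obj :: "'s set \<Rightarrow> ('s \<Rightarrow> real) \<Rightarrow> ('d \<times> 's) set \<Rightarrow> ('d \<times> 's \<Rightarrow> real) \<Rightarrow> real" where
  "P2_obj S w E2 y = (\<Sum>j\<in>S. w j * load_off E2 y j)"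

definition P2_optimal ::
  "'d set \<Rightarrow> 's set \<Rightarrow> ('s \<Rightarrow> real) \<Rightarrow> ('d \<times> 's) set \<Rightarrow> ('d \<times> 's) set \<Rightarrow> ('d \<times> 's \<Rightarrow> real) \<Rightarrow> ('d \<times> 's \<Rightarrow> real) \<Rightarrow> bool" where
  "P2_optimal D2 S w E1 E2 xbar y \<longleftrightarrow>
     P2_feasible D2 S E1 E2 xbar y \<and>
     (\<forall>y'. P2_feasible D2 S E1 E2 xbar y' \<longrightarrow> P2_obj S w E2 y' \<le> P2_obj S w E2 y)"

definition alg_value ::
  "'s set \<Rightarrow> ('s \<Rightarrow> real) \<Rightarrow> ('d \<times> 's) set \<Rightarrow> ('d \<times> 's) set \<Rightarrow> ('d \<times> 's \<Rightarrow> real) \<Rightarrow> ('d \<times> 's \<Rightarrow> real) \<Rightarrow> real" where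
  "alg_value S w E1 E2 xbar ybar = (\<Sum>j\<in>S. w j * (load_off E1 xbar j + load_off E2 ybar j))"

definition fU :: "real \<Rightarrow> real \<Rightarrow> real" where
  "fU R x = min ((1 - R) / (1 - x)) 1"

definition fL :: "real \<Rightarrow> real \<Rightarrow> real" where
  "fL R x = max (1 - (1 - R) / x) 0"

end

theory Submission
  imports Defs
begin

definition fLc :: "real \<Rightarrow> real \<Rightarrow> real" where
  "fLc R x = 1 - (1 - R) / max x (1 - R)"
definition fUc :: "real \<Rightarrow> real \<Rightarrow> real" where
  "fUc R x = (1 - R) / (1 - min x R)"

lemma fLc_cont: "R < 1 \<Longrightarrow> isCont (fLc R) z"
  unfolding fLc_def by (intro continuous_intros) auto

lemma fUc_cont: "R < 1 \<Longrightarrow> isCont (fUc R) z"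
  unfolding fUc_def by (intro continuous_intros) auto

lemma fLc_mono: "R < 1 \<Longrightarrow> mono (fLc R)"
  unfolding fLc_def mono_def
  by (auto intro!: divide_left_mono simp: max_def)

lemma fUc_mono: "R < 1 \<Longrightarrow> mono (fUc R)"
  unfolding fUc_def mono_def
  by (auto intro!: divide_left_mono simp: min_def)

lemma fL_eq: "R < 1 \<Longrightarrow> 0 < x \<Longrightarrow> fL R x = fLc R x"
  unfolding fL_def fLc_def by (auto simp: max_def field_simps)

lemma fU_eq: "R < 1 \<Longrightarrow> x < 1 \<Longrightarrow> fU R x = fUc R x"
  unfolding fU_def fUc_def by (auto simp: min_def field_simps)


lemma int_L: "R < 1 \<Longrightarrow> integral {0..z} (fL R) = integral {0..z} (fLc R)"
  by (rule integral_spike[of "{0}"]) (auto simp: fL_eq)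

lemma int_U: "R < 1 \<Longrightarrow> z \<le> 1 \<Longrightarrow> integral {0..z} (fU R) = integral {0..z} (fUc R)"
  by (rule integral_spike[of "{1}"]) (auto simp: fU_eq)

lemma int_bound:
  fixes g :: "real \<Rightarrow> real"
  assumes c: "\<And>z. isCont g z" and m: "mono g" and a: "0 \<le> a" and b: "0 \<le> b"
  shows "integral {0..b} g - integral {0..a} g \<le> (b - a) * g b"
proof -
  have int: "g integrable_on {u..v}" for u v
    by (rule integrable_continuous_interval) (simp add: c continuous_at_imp_continuous_on)
  show ?thesis
  proof (cases "a \<le> b")
    case True
    have "integral {0..a} g + integral {a..b} g = integral {0..b} g"
      using Henstock_Kurzweil_Integration.integral_combine[OF a True int] .
    moreover have "integral {a..b} g \<le> integral {a..b} (\<lambda>_. g b)"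
      by (rule integral_le[OF int]) (auto simp: m monoD)
    ultimately show ?thesis using True by (simp add: mult.commute)
  next
    case False
    have "integral {0..b} g + integral {b..a} g = integral {0..a} g"
      using Henstock_Kurzweil_Integration.integral_combine[OF b _ int] False by simp
    moreover have "integral {b..a} (\<lambda>_. g b) \<le> integral {b..a} g"
      by (rule integral_le[OF _ int]) (auto simp: m monoD)
    ultimately show ?thesis using False by (simp add: algebra_simps)
  qed
qed


lemma load_off_nonneg: "\<forall>e\<in>E. 0 \<le> x e \<Longrightarrow> 0 \<le> load_off E x j"
  unfolding load_off_def by (rule sum_nonneg) auto

lemma foc:
  fixes xbar x' :: "'d \<times> 's \<Rightarrow> real" and g f :: "'s \<Rightarrow> real \<Rightarrow> real"
  assumes fS: "finite S" and fE: "finite E1"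
   and opt: "P1_optimal D1 S w f E1 xbar" and feas: "P1_feasible D1 S E1 x'"
   and w: "\<forall>j\<in>S. 0 \<le> w j"
   and gc: "\<And>j z. j \<in> S \<Longrightarrow> isCont (g j) z" and gm: "\<And>j. j\<in>S \<Longrightarrow> mono (g j)"
   and gi: "\<And>j z. j\<in>S \<Longrightarrow> 0 \<le> z \<Longrightarrow> z \<le> 1 \<Longrightarrow> integral {0..z} (f j) = integral {0..z} (g j)"
  shows "(\<Sum>j\<in>S. w j * (1 - g j (load_off E1 xbar j)) * (load_off E1 x' j - load_off E1 xbar j)) \<le> 0"
proof (rule ccontr)
  define xb where "xb = load_off E1 xbar"
  define xp where "xp = load_off E1 x'"
  define xt where "xt t = (\<lambda>e. xbar e + t * (x' e - xbar e))" for t :: real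
  define \<phi> where "\<phi> t = (\<Sum>j\<in>S. w j * (xp j - xb j) * (1 - g j (xb j + t * (xp j - xb j))))" for t
  assume "\<not> ?thesis"
  hence pos: "\<phi> 0 > 0" unfolding \<phi>_def xb_def xp_def by (simp add: mult_ac)
  have fb: "P1_feasible D1 S E1 xbar" using opt by (simp add: P1_optimal_def)
  have lt: "load_off E1 (xt t) j = xb j + t * (xp j - xb j)" for t j
    unfolding load_off_def xt_def xb_def xp_def by (simp add: sum.distrib right_diff_distrib sum_subtractf sum_distrib_left)
  have lot: "load_on E1 (xt t) i = load_on E1 xbar i + t * (load_on E1 x' i - load_on E1 xbar i)" for t i
    unfolding load_on_def xt_def by (simp add: sum.distrib right_diff_distrib sum_subtractf sum_distrib_left)
  have cvx: "a + t * (b - a) \<le> 1" if "a \<le> 1" "b \<le> 1" "0 \<le> t" "t \<le> 1" for a b t :: real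
  proof -
    have "(1 - t) * a + t * b \<le> 1" by (rule convex_bound_le) (use that in auto)
    thus ?thesis by (simp add: algebra_simps)
  qed
  have cvx0: "0 \<le> a + t * (b - a)" if "0 \<le> a" "0 \<le> b" "0 \<le> t" "t \<le> 1" for a b t :: real
  proof -
    have "0 \<le> (1 - t) * a + t * b" using that by simp
    thus ?thesis by (simp add: algebra_simps)
  qed
  have xb01: "0 \<le> xb j" "xb j \<le> 1" if "j \<in> S" for j
    using fb that unfolding xb_def P1_feasible_def by (auto intro: load_off_nonneg)
  have xp01: "0 \<le> xp j" "xp j \<le> 1" if "j \<in> S" for j
    using feas that unfolding xp_def P1_feasible_def by (auto intro: load_off_nonneg)
  have ft: "P1_feasible D1 S E1 (xt t)" if "0 \<le> t" "t \<le> 1" for t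
    using fb feas that unfolding P1_feasible_def
    apply (simp only: lt lot xb_def xp_def)
    apply (auto intro!: cvx)
    apply (auto simp: xt_def intro!: cvx0)
    done
  have key: "t * \<phi> t \<le> P1_obj S w f E1 (xt t) - P1_obj S w f E1 xbar" if t: "0 \<le> t" "t \<le> 1" for t
  proof -
    have "t * \<phi> t = (\<Sum>j\<in>S. w j * ((xb j + t * (xp j - xb j) - xb j) * (1 - g j (xb j + t * (xp j - xb j)))))"
      unfolding \<phi>_def by (simp add: sum_distrib_left mult_ac)
    also have "\<dots> \<le> (\<Sum>j\<in>S. w j * ((xb j + t * (xp j - xb j) - integral {0..xb j + t * (xp j - xb j)} (f j))
                   - (xb j - integral {0..xb j} (f j))))"
    proof (rule sum_mono)
      fix j assume j: "j \<in> S"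
      let ?y = "xb j + t * (xp j - xb j)"
      have y: "0 \<le> ?y" "?y \<le> 1" using cvx cvx0 xb01[OF j] xp01[OF j] t by auto
      have "integral {0..?y} (g j) - integral {0..xb j} (g j) \<le> (?y - xb j) * g j ?y"
        by (rule int_bound) (use gc gm j y xb01[OF j] in auto)
      hence "(?y - xb j) * (1 - g j ?y) \<le> (?y - integral {0..?y} (f j)) - (xb j - integral {0..xb j} (f j))"
        using gi[OF j y] gi[OF j xb01[OF j]] by (simp add: algebra_simps)
      thus "w j * ((?y - xb j) * (1 - g j ?y)) \<le> w j * ((?y - integral {0..?y} (f j)) - (xb j - integral {0..xb j} (f j)))"
        using w j by (simp add: mult_left_mono)
    qed
    also have "\<dots> = P1_obj S w f E1 (xt t) - P1_obj S w f E1 xbar"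
      unfolding P1_obj_def lt xb_def by (simp add: sum_subtractf sum.distrib algebra_simps)
    finally show ?thesis .
  qed
  have "(\<phi> \<longlongrightarrow> \<phi> 0) (at_right 0)"
    unfolding \<phi>_def
    by (intro tendsto_intros isCont_tendsto_compose[OF gc]) auto
  hence "\<forall>\<^sub>F t in at_right 0. \<phi> t > 0" using pos by (rule order_tendstoD)
  moreover have "\<forall>\<^sub>F t in at_right (0::real). t < 1" by (rule eventually_at_right_field[THEN iffD2]) (auto intro: exI[of _ 1])
  moreover have "\<forall>\<^sub>F t in at_right (0::real). 0 < t" by (rule eventually_at_right_less)
  ultimately have "\<forall>\<^sub>F t in at_right (0::real). \<phi> t > 0 \<and> t < 1 \<and> 0 < t" by eventually_elim auto
  then obtain t where tt: "\<phi> t > 0" "t < 1" "0 < t"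
    using eventually_happens trivial_limit_at_right_real by blast
  have "0 < t * \<phi> t" using tt by simp
  also have "\<dots> \<le> P1_obj S w f E1 (xt t) - P1_obj S w f E1 xbar" using key tt by simp
  finally have "P1_obj S w f E1 xbar < P1_obj S w f E1 (xt t)" by simp
  moreover have "P1_obj S w f E1 (xt t) \<le> P1_obj S w f E1 xbar"
    using opt ft tt unfolding P1_optimal_def by simp
  ultimately show False by simp
qed


lemma ineqL:
  assumes "0 \<le> R" "R < 1" "0 \<le> x" "x \<le> 1"
  shows "0 \<le> x - (2 * sqrt (1 - R) - (1 - R)) + (1 - fLc R x) * (1 - x)"
proof -
  define s where "s = sqrt (1 - R)"
  have s0: "0 \<le> s" and s2: "s^2 = 1 - R" using assms by (auto simp: s_def)
  show ?thesis
  proof (cases "x \<le> 1 - R")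
    case True
    hence "fLc R x = 0" using assms by (simp add: fLc_def max_def)
    hence "x - (2 * s - (1 - R)) + (1 - fLc R x) * (1 - x) = (1 - s)^2" using s2
      by (simp add: power2_eq_square algebra_simps)
    thus ?thesis by (simp add: s_def)
  next
    case False
    hence xp: "x > 0" and fx: "fLc R x = 1 - s^2 / x" using assms s2 by (auto simp: fLc_def max_def)
    have R: "R = 1 - s^2" using s2 by simp
    have "x - (2 * s - (1 - R)) + (1 - fLc R x) * (1 - x) = (x - s)^2 / x" using xp
      by (subst fx) (simp add: R field_simps power2_eq_square)
    also have "\<dots> \<ge> 0" using xp by simp
    finally show ?thesis by (simp add: s_def)
  qed
qed

lemma fUc_le1: "0 \<le> R \<Longrightarrow> R < 1 \<Longrightarrow> fUc R x \<le> 1"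
  unfolding fUc_def by (auto simp: min_def divide_le_eq)

lemma fUc_ge0: "0 \<le> R \<Longrightarrow> R < 1 \<Longrightarrow> 0 \<le> fUc R x"
  unfolding fUc_def by (auto simp: min_def)

lemma fLc_le1: "0 \<le> R \<Longrightarrow> R < 1 \<Longrightarrow> fLc R x \<le> 1"
  unfolding fLc_def by (auto simp: max_def)

lemma ineqU2:
  assumes "0 \<le> R" "R < 1" "0 \<le> x" "x \<le> 1"
  shows "(1 - fUc R x) * x \<le> 1 - (2 * sqrt (1 - R) - (1 - R))"
proof -
  define s where "s = sqrt (1 - R)"
  have s0: "0 \<le> s" and s2: "s^2 = 1 - R" using assms by (auto simp: s_def)
  have rhs: "1 - (2 * s - (1 - R)) = (1 - s)^2" using s2 by (simp add: power2_eq_square algebra_simps)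
  show ?thesis
  proof (cases "R \<le> x")
    case True
    hence "fUc R x = 1" using assms by (simp add: fUc_def min_def)
    thus ?thesis using rhs by (simp add: s_def)
  next
    case False
    hence xl: "x < 1" and fx: "fUc R x = s^2 / (1 - x)" using assms s2 by (auto simp: fUc_def min_def)
    have R: "R = 1 - s^2" using s2 by simp
    have "(1 - s)^2 - (1 - fUc R x) * x = (x - (1 - s))^2 / (1 - x)" using xl
      by (subst fx) (simp add: R field_simps power2_eq_square)
    also have "\<dots> \<ge> 0" using xl by simp
    finally show ?thesis using rhs by (simp add: s_def)
  qed
qed


lemma sum_if_single: "finite T \<Longrightarrow> T \<inter> B = {e0} \<Longrightarrow> (\<Sum>e\<in>T. if e \<in> B then h e else 0) = (h e0 :: real)"
  by (simp add: sum.inter_restrict[symmetric])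

lemma sum_if_empty: "T \<inter> B = {} \<Longrightarrow> (\<Sum>e\<in>T. if e \<in> B then h e else 0) = (0 :: real)"
  by (rule sum.neutral) auto

lemma advice_part:
  fixes D1 :: "'d set" and S :: "'s set" and E1 A :: "('d \<times> 's) set" and xbar :: "'d \<times> 's \<Rightarrow> real"
  assumes fE: "finite E1" and E1: "E1 \<subseteq> D1 \<times> S" and AE: "A \<subseteq> E1" and mA: "is_matching A"
    and fb: "P1_feasible D1 S E1 xbar"
  shows "\<exists>x'. P1_feasible D1 S E1 x' \<and> (\<forall>j\<in>S. (j \<in> covered_off A \<longrightarrow> load_off E1 x' j = 1)
           \<and> (j \<notin> covered_off A \<longrightarrow> load_off E1 x' j \<ge> 0))"
proof -
  define u where "u j = (\<Sum>e\<in>{e\<in>E1. snd e = j}. if e \<in> {e. fst e \<notin> fst ` A} then xbar e else 0)" for j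
  define x' where "x' e = (if e \<in> A then 1 - u (snd e) else 0) + (if e \<in> {e. fst e \<notin> fst ` A} then xbar e else 0)" for e
  have xb0: "\<forall>e\<in>E1. 0 \<le> xbar e" using fb by (simp add: P1_feasible_def)
  have u0: "0 \<le> u j" for j unfolding u_def by (rule sum_nonneg) (use xb0 in auto)
  have u1: "u j \<le> 1" if "j \<in> S" for j
  proof -
    have "u j \<le> load_off E1 xbar j" unfolding u_def load_off_def by (rule sum_mono) (use xb0 in auto)
    also have "\<dots> \<le> 1" using fb that by (simp add: P1_feasible_def)
    finally show ?thesis .
  qed
  have mfst: "e = e'" if "e \<in> A" "e' \<in> A" "fst e = fst e'" for e e'
    using mA that unfolding is_matching_def by blast
  have msnd: "e = e'" if "e \<in> A" "e' \<in> A" "snd e = snd e'" for e e'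
    using mA that unfolding is_matching_def by blast
  have lo: "load_off E1 x' j = (\<Sum>e\<in>{e\<in>E1. snd e = j}. if e \<in> A then 1 - u (snd e) else 0) + u j" for j
    unfolding load_off_def x'_def u_def by (simp add: sum.distrib)
  have ln: "load_on E1 x' i = (\<Sum>e\<in>{e\<in>E1. fst e = i}. if e \<in> A then 1 - u (snd e) else 0)
       + (\<Sum>e\<in>{e\<in>E1. fst e = i}. if e \<in> {e. fst e \<notin> fst ` A} then xbar e else 0)" for i
    unfolding load_on_def x'_def by (simp add: sum.distrib)
  have fT: "finite {e\<in>E1. P e}" for P using fE by simp
  have loS1: "load_off E1 x' j = 1" if jA: "j \<in> covered_off A" for j
  proof -
    obtain e0 where e0: "e0 \<in> A" "snd e0 = j" using jA unfolding covered_off_def by blast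
    have "{e\<in>E1. snd e = j} \<inter> A = {e0}" using e0 AE msnd by blast
    hence "(\<Sum>e\<in>{e\<in>E1. snd e = j}. if e \<in> A then 1 - u (snd e) else 0) = 1 - u j"
      using sum_if_single[OF fT] e0 by simp
    thus ?thesis using lo by simp
  qed
  have loN: "load_off E1 x' j = u j" if "j \<notin> covered_off A" for j
  proof -
    have "{e\<in>E1. snd e = j} \<inter> A = {}" using that by (force simp: covered_off_def)
    thus ?thesis using lo sum_if_empty by simp
  qed
  have feas: "P1_feasible D1 S E1 x'"
    unfolding P1_feasible_def
  proof (intro conjI ballI)
    fix e assume e: "e \<in> E1"
    hence "snd e \<in> S" using E1 by auto
    thus "0 \<le> x' e" unfolding x'_def using u1 xb0 e by auto
  next
    fix j assume "j \<in> S"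
    thus "load_off E1 x' j \<le> 1" using loS1 loN u1 by (cases "j \<in> covered_off A") auto
  next
    fix i assume "i \<in> D1"
    show "load_on E1 x' i \<le> 1"
    proof (cases "i \<in> fst ` A")
      case True
      then obtain e0 where e0: "e0 \<in> A" "fst e0 = i" by auto
      have "{e\<in>E1. fst e = i} \<inter> A = {e0}" using e0 AE mfst by blast
      hence s1: "(\<Sum>e\<in>{e\<in>E1. fst e = i}. if e \<in> A then 1 - u (snd e) else 0) = 1 - u (snd e0)"
        using sum_if_single[OF fT] by simp
      have "{e\<in>E1. fst e = i} \<inter> {e. fst e \<notin> fst ` A} = {}" using True by auto
      hence s2: "(\<Sum>e\<in>{e\<in>E1. fst e = i}. if e \<in> {e. fst e \<notin> fst ` A} then xbar e else 0) = 0"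
        by (rule sum_if_empty)
      show ?thesis using ln s1 s2 u0 by simp
    next
      case False
      have "{e\<in>E1. fst e = i} \<inter> A = {}" using False by force
      hence s1: "(\<Sum>e\<in>{e\<in>E1. fst e = i}. if e \<in> A then 1 - u (snd e) else 0) = 0"
        by (rule sum_if_empty)
      have s2: "(\<Sum>e\<in>{e\<in>E1. fst e = i}. if e \<in> {e. fst e \<notin> fst ` A} then xbar e else 0) = load_on E1 xbar i"
        unfolding load_on_def using False by (intro sum.cong) auto
      show ?thesis using ln s1 s2 fb \<open>i \<in> D1\<close> by (simp add: P1_feasible_def)
    qed
  qed
  show ?thesis using feas loS1 loN u0 by auto
qed


lemma sum_le1_single:
  assumes "finite T" "\<And>a b. a \<in> T \<Longrightarrow> b \<in> T \<Longrightarrow> a = b" "\<And>a. a \<in> T \<Longrightarrow> h a \<le> (1::real)"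
  shows "sum h T \<le> 1"
proof (cases "T = {}")
  case False
  then obtain a where "a \<in> T" by auto
  hence "T = {a}" using assms(2) by blast
  thus ?thesis using assms(3) by simp
qed simp

lemma p2_part:
  fixes D2 :: "'d set" and S :: "'s set" and E1 E2 M :: "('d \<times> 's) set" and xbar ybar :: "'d \<times> 's \<Rightarrow> real"
  assumes fE: "finite E2" and E2: "E2 \<subseteq> D2 \<times> S" and ME: "M \<subseteq> E2" and mM: "is_matching M"
    and opt: "P2_optimal D2 S w E1 E2 xbar ybar"
    and xb: "\<And>j. j \<in> S \<Longrightarrow> 0 \<le> load_off E1 xbar j \<and> load_off E1 xbar j \<le> 1"
  shows "(\<Sum>j\<in>S. w j * (if j \<in> covered_off M then 1 - load_off E1 xbar j else 0)) \<le> P2_obj S w E2 ybar"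
proof -
  define y where "y e = (if e \<in> M then 1 - load_off E1 xbar (snd e) else 0)" for e
  have mfst: "e = e'" if "e \<in> M" "e' \<in> M" "fst e = fst e'" for e e'
    using mM that unfolding is_matching_def by blast
  have msnd: "e = e'" if "e \<in> M" "e' \<in> M" "snd e = snd e'" for e e'
    using mM that unfolding is_matching_def by blast
  have fT: "finite {e\<in>E2. P e}" for P using fE by simp
  have ly: "load_off E2 y j = (if j \<in> covered_off M then 1 - load_off E1 xbar j else 0)" for j
  proof (cases "j \<in> covered_off M")
    case True
    then obtain e0 where e0: "e0 \<in> M" "snd e0 = j" unfolding covered_off_def by blast
    have "{e\<in>E2. snd e = j} \<inter> M = {e0}" using e0 ME msnd by blast
    hence "load_off E2 y j = 1 - load_off E1 xbar (snd e0)"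
      unfolding load_off_def y_def by (rule sum_if_single[OF fT])
    thus ?thesis using True e0 by simp
  next
    case False
    have "{e\<in>E2. snd e = j} \<inter> M = {}" using False by (force simp: covered_off_def)
    hence "load_off E2 y j = 0" unfolding load_off_def y_def by (rule sum_if_empty)
    thus ?thesis using False by simp
  qed
  have feas: "P2_feasible D2 S E1 E2 xbar y"
    unfolding P2_feasible_def
  proof (intro conjI ballI)
    fix e assume "e \<in> E2"
    thus "0 \<le> y e" using E2 xb unfolding y_def by auto
  next
    fix i assume "i \<in> D2"
    have "load_on E2 y i = (\<Sum>e\<in>{e\<in>E2. fst e = i} \<inter> M. 1 - load_off E1 xbar (snd e))"
      unfolding load_on_def y_def by (simp add: sum.inter_restrict[OF fT])
    also have "\<dots> \<le> 1"
    proof (rule sum_le1_single)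
      show "finite ({e\<in>E2. fst e = i} \<inter> M)" using fT by simp
      show "a = b" if "a \<in> {e\<in>E2. fst e = i} \<inter> M" "b \<in> {e\<in>E2. fst e = i} \<inter> M" for a b
        using that mfst by auto
      show "1 - load_off E1 xbar (snd a) \<le> 1" if "a \<in> {e\<in>E2. fst e = i} \<inter> M" for a
        using that E2 xb by auto
    qed
    finally show "load_on E2 y i \<le> 1" .
  next
    fix j assume "j \<in> S"
    thus "load_off E2 y j \<le> 1 - load_off E1 xbar j" using ly xb by auto
  qed
  hence "P2_obj S w E2 y \<le> P2_obj S w E2 ybar" using opt unfolding P2_optimal_def by blast
  thus ?thesis unfolding P2_obj_def ly .
qed


theorem theorem2:
  fixes D1 D2 :: "'d set" and S :: "'s set" and E1 E2 A :: "('d \<times> 's) set"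
    and w :: "'s \<Rightarrow> real" and R :: real and xbar ybar :: "'d \<times> 's \<Rightarrow> real"
  assumes "finite D1" and "finite D2" and "finite S" and "D1 \<inter> D2 = {}"
    and "E1 \<subseteq> D1 \<times> S" and "E2 \<subseteq> D2 \<times> S"
    and "\<forall>j\<in>S. 0 \<le> w j"
    and "A \<subseteq> E1" and "is_matching A"
    and "0 \<le> R" and "R \<le> 3/4"
    and "P1_optimal D1 S w (\<lambda>j. if j \<in> covered_off A then fL R else fU R) E1 xbar"
    and "P2_optimal D2 S w E1 E2 xbar ybar"
  shows "alg_value S w E1 E2 xbar ybar \<ge> (2 * sqrt (1 - R) - (1 - R)) * advice_value S w E2 A"
proof -
  note a = assms
  define C where "C = 2 * sqrt (1 - R) - (1 - R)"
  define S1 where "S1 = covered_off A"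
  define xb where "xb = load_off E1 xbar"
  have R1: "R < 1" using a by simp
  have fE1: "finite E1" using a(1,3,5) finite_subset by blast
  have fE2: "finite E2" using a(2,3,6) finite_subset by blast
  have S1S: "S1 \<subseteq> S" using a(5,8) unfolding S1_def covered_off_def by auto
  have fb: "P1_feasible D1 S E1 xbar" using a(12) by (simp add: P1_optimal_def)
  have xb01: "0 \<le> xb j \<and> xb j \<le> 1" if "j \<in> S" for j
    using fb that unfolding xb_def P1_feasible_def by (auto intro: load_off_nonneg)
  obtain x' where fx': "P1_feasible D1 S E1 x'"
    and lx': "\<forall>j\<in>S. (j \<in> covered_off A \<longrightarrow> load_off E1 x' j = 1) \<and> (j \<notin> covered_off A \<longrightarrow> load_off E1 x' j \<ge> 0)"
    using advice_part[OF fE1 a(5,8,9) fb] by blast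
  define xp where "xp = load_off E1 x'"
  have F: "(\<Sum>j\<in>S. w j * (1 - (\<lambda>j. if j \<in> covered_off A then fLc R else fUc R) j (load_off E1 xbar j))
            * (load_off E1 x' j - load_off E1 xbar j)) \<le> 0"
  proof (rule foc[OF a(3) fE1 a(12) fx' a(7)])
    fix j z assume "j \<in> S"
    show "isCont ((\<lambda>j. if j \<in> covered_off A then fLc R else fUc R) j) z"
      using fLc_cont[OF R1] fUc_cont[OF R1] by simp
  next
    fix j assume "j \<in> S"
    show "mono ((\<lambda>j. if j \<in> covered_off A then fLc R else fUc R) j)"
      using fLc_mono[OF R1] fUc_mono[OF R1] by simp
  next
    fix j z assume "j \<in> S" "0 \<le> z" "z \<le> (1::real)"
    thus "integral {0..z} ((\<lambda>j. if j \<in> covered_off A then fL R else fU R) j) =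
          integral {0..z} ((\<lambda>j. if j \<in> covered_off A then fLc R else fUc R) j)"
      using int_L[OF R1] int_U[OF R1] by simp
  qed
  define c where "c j = w j * (1 - (if j \<in> S1 then fLc R (xb j) else fUc R (xb j)))" for j
  have F': "(\<Sum>j\<in>S. c j * (xp j - xb j)) \<le> 0"
  proof -
    have "(\<Sum>j\<in>S. c j * (xp j - xb j)) = (\<Sum>j\<in>S. w j * (1 - (\<lambda>j. if j \<in> covered_off A then fLc R else fUc R) j (load_off E1 xbar j))
            * (load_off E1 x' j - load_off E1 xbar j))"
      unfolding c_def xb_def xp_def S1_def by (rule sum.cong) auto
    thus ?thesis using F by simp
  qed
  define V where "V = {(\<Sum>j\<in>covered_off M. w j) | M. M \<subseteq> E2 \<and> is_matching M \<and> covered_off M \<inter> covered_off A = {}}"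
  have "V \<subseteq> (\<lambda>M. \<Sum>j\<in>covered_off M. w j) ` Pow E2" unfolding V_def by auto
  hence fV: "finite V" using fE2 finite_subset by blast
  have "(\<Sum>j\<in>covered_off {}. w j) \<in> V" unfolding V_def by (force simp: is_matching_def covered_off_def)
  hence "V \<noteq> {}" by auto
  hence "Max V \<in> V" using fV by simp
  then obtain M where M: "M \<subseteq> E2" "is_matching M" "covered_off M \<inter> S1 = {}"
     and MV: "Max V = (\<Sum>j\<in>covered_off M. w j)" unfolding V_def S1_def by auto
  have adv: "advice_value S w E2 A = (\<Sum>j\<in>S1. w j) + (\<Sum>j\<in>covered_off M. w j)"
    unfolding advice_value_def S1_def using MV V_def by simp
  have MS: "covered_off M \<subseteq> S" using M(1) a(6) unfolding covered_off_def by auto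
  have P2: "(\<Sum>j\<in>S. w j * (if j \<in> covered_off M then 1 - xb j else 0)) \<le> P2_obj S w E2 ybar"
    unfolding xb_def by (rule p2_part[OF fE2 a(6) M(1,2) a(13)]) (use xb01 xb_def in auto)
  have alg: "alg_value S w E1 E2 xbar ybar = (\<Sum>j\<in>S. w j * xb j) + P2_obj S w E2 ybar"
    unfolding alg_value_def P2_obj_def xb_def by (simp add: sum.distrib distrib_left)
  have sS1: "(\<Sum>j\<in>S1. w j) = (\<Sum>j\<in>S. if j \<in> S1 then w j else 0)"
    using sum.inter_restrict[OF a(3), of w S1] S1S by (simp add: Int_absorb1)
  have sM: "(\<Sum>j\<in>covered_off M. w j) = (\<Sum>j\<in>S. if j \<in> covered_off M then w j else 0)"
    using sum.inter_restrict[OF a(3), of w "covered_off M"] MS by (simp add: Int_absorb1)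
  have pj: "C * ((if j \<in> S1 then w j else 0) + (if j \<in> covered_off M then w j else 0))
      \<le> w j * xb j + w j * (if j \<in> covered_off M then 1 - xb j else 0) + c j * (xp j - xb j)"
    if j: "j \<in> S" for j
  proof -
    have w0: "0 \<le> w j" using a(7) j by simp
    have x0: "0 \<le> xb j" and x1: "xb j \<le> 1" using xb01[OF j] by auto
    show ?thesis
    proof (cases "j \<in> S1")
      case True
      hence nM: "j \<notin> covered_off M" using M(3) by auto
      have xp1: "xp j = 1" using lx' j True unfolding xp_def S1_def by simp
      have "0 \<le> w j * (xb j - C + (1 - fLc R (xb j)) * (1 - xb j))"
        using ineqL[OF a(10) R1 x0 x1] w0 unfolding C_def by simp
      thus ?thesis using True nM xp1 unfolding c_def by (simp add: algebra_simps)
    next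
      case False
      have xp0: "0 \<le> xp j" using lx' j False unfolding xp_def S1_def by simp
      have g0: "0 \<le> 1 - fUc R (xb j)" using fUc_le1[OF a(10) R1] by simp
      have cj: "c j = w j * (1 - fUc R (xb j))" using False unfolding c_def by simp
      have Q: "0 \<le> c j * xp j" using xp0 g0 w0 cj by simp
      have P: "c j * xb j = w j * ((1 - fUc R (xb j)) * xb j)" using cj by simp
      have h2: "w j * ((1 - fUc R (xb j)) * xb j) \<le> w j * (1 - C)"
        using ineqU2[OF a(10) R1 x0 x1] w0 unfolding C_def by (intro mult_left_mono) auto
      have h3: "w j * ((1 - fUc R (xb j)) * xb j) \<le> w j * xb j"
        using fUc_ge0[OF a(10) R1, of "xb j"] x0 w0 by (intro mult_left_mono) (auto simp: algebra_simps)
      show ?thesis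
      proof (cases "j \<in> covered_off M")
        case True
        have e: "w j * xb j + w j * (1 - xb j) + c j * (xp j - xb j) = w j + c j * xp j - c j * xb j"
          by (simp add: algebra_simps)
        have e2: "w j * (1 - C) = w j - C * w j" by (simp add: algebra_simps)
        show ?thesis using True False e e2 P Q h2 by simp
      next
        case nM: False
        have e: "w j * xb j + c j * (xp j - xb j) = w j * xb j + c j * xp j - c j * xb j"
          by (simp add: algebra_simps)
        show ?thesis using nM False e P Q h3 by simp
      qed
    qed
  qed
  have "C * advice_value S w E2 A = (\<Sum>j\<in>S. C * ((if j \<in> S1 then w j else 0) + (if j \<in> covered_off M then w j else 0)))"
    unfolding adv sS1 sM by (simp only: sum_distrib_left distrib_left sum.distrib)
  also have "\<dots> \<le> (\<Sum>j\<in>S. w j * xb j + w j * (if j \<in> covered_off M then 1 - xb j else 0) + c j * (xp j - xb j))"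
    by (rule sum_mono) (rule pj)
  also have "\<dots> = (\<Sum>j\<in>S. w j * xb j) + (\<Sum>j\<in>S. w j * (if j \<in> covered_off M then 1 - xb j else 0)) + (\<Sum>j\<in>S. c j * (xp j - xb j))"
    by (simp add: sum.distrib)
  also have "\<dots> \<le> alg_value S w E1 E2 xbar ybar" using F' P2 alg by simp
  finally show ?thesis unfolding C_def .
qed

end
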